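(* Let $\bm{W}_0$ and $\widetilde{\bm{W}}$ be real $(d+2)\times(d+2)$ matrices (indexed $0,\ldots,d+1$) whose directed graphs are both acyclic. Suppose that for every $j\in\{0,\ldots,d+1\}$, every parent of $j$ in the directed graph of $\bm{W}_0$ is an ancestor of $j$ in the directed graph of $\widetilde{\bm{W}}$. Then for every $j\in\{0,\ldots,d+1\}$, no descendant of $j$ in the directed graph of $\bm{W}_0$ is an ancestor of $j$ in the directed graph of $\widetilde{\bm{W}}$.
   Context: For a matrix $\bm{W}$, its directed graph has vertex set $\{0,\ldots,d+1\}$ and an arrow $i\to j$ iff $W_{j,i}\neq 0$; $i$ is a parent of $j$ if $i\to j$; $i$ is an ancestor of $j$ (and $j$ a descendant of $i$) if there is a directed path from $i$ to $j$ through distinct nodes with at least one step. *)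

theory Defs
  imports Complex_Main
begin

text \<open>A (d+2)x(d+2) real matrix indexed 0..d+1 is represented as W :: nat => nat => real,
  W j i being the (j,i) entry; only entries with indices <= d+1 matter.\<close>

definition vertices :: "nat \<Rightarrow> nat set" where
  "vertices d = {0..d+1}"

definition arrow :: "nat \<Rightarrow> (nat \<Rightarrow> nat \<Rightarrow> real) \<Rightarrow> nat \<Rightarrow> nat \<Rightarrow> bool" where
  "arrow d W i j \<longleftrightarrow> i \<in> vertices d \<and> j \<in> vertices d \<and> W j i \<noteq> 0"

definition parent :: "nat \<Rightarrow> (nat \<Rightarrow> nat \<Rightarrow> real) \<Rightarrow> nat \<Rightarrow> nat \<Rightarrow> bool" where
  "parent d W i j \<longleftrightarrow> arrow d W i j"

definition is_path :: "nat \<Rightarrow> (nat \<Rightarrow> nat \<Rightarrow> real) \<Rightarrow> nat list \<Rightarrow> nat \<Rightarrow> nat \<Rightarrow> bool" where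
  "is_path d W p i j \<longleftrightarrow> length p \<ge> 2 \<and> hd p = i \<and> last p = j \<and>
     (\<forall>k. Suc k < length p \<longrightarrow> arrow d W (p ! k) (p ! Suc k))"

definition ancestor :: "nat \<Rightarrow> (nat \<Rightarrow> nat \<Rightarrow> real) \<Rightarrow> nat \<Rightarrow> nat \<Rightarrow> bool" where
  "ancestor d W i j \<longleftrightarrow> (\<exists>p. is_path d W p i j \<and> distinct p)"

definition descendant :: "nat \<Rightarrow> (nat \<Rightarrow> nat \<Rightarrow> real) \<Rightarrow> nat \<Rightarrow> nat \<Rightarrow> bool" where
  "descendant d W j i \<longleftrightarrow> ancestor d W i j"

definition acyclic_graph :: "nat \<Rightarrow> (nat \<Rightarrow> nat \<Rightarrow> real) \<Rightarrow> bool" where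
  "acyclic_graph d W \<longleftrightarrow> (\<nexists>p i. is_path d W p i i)"

end

theory Submission
  imports Defs
begin

definition rel :: "nat \<Rightarrow> (nat \<Rightarrow> nat \<Rightarrow> real) \<Rightarrow> (nat \<times> nat) set" where
  "rel d W = {(a,b). arrow d W a b}"

lemma path_trancl: "is_path d W p i j \<Longrightarrow> (i,j) \<in> (rel d W)\<^sup>+"
proof (induction p arbitrary: i)
  case Nil then show ?case by (simp add: is_path_def)
next
  case (Cons a q)
  then have ai: "a = i" and lq: "length q \<ge> 1" by (auto simp: is_path_def)
  obtain b r where q: "q = b # r" using lq by (cases q) auto
  have arr: "arrow d W i b" using Cons.prems ai q unfolding is_path_def
    by (metis Suc_less_eq length_Cons nth_Cons_0 nth_Cons_Suc zero_less_Suc)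
  show ?case
  proof (cases r)
    case Nil
    then have "b = j" using Cons.prems q by (simp add: is_path_def)
    then show ?thesis using arr by (auto simp: rel_def)
  next
    case (Cons c s)
    have "is_path d W q b j" using Cons.prems q Cons unfolding is_path_def
      by (auto; metis Suc_less_eq length_Cons nth_Cons_Suc)
    then have "(b,j) \<in> (rel d W)\<^sup>+" using Cons.IH by blast
    then show ?thesis using arr by (auto simp: rel_def intro: trancl_into_trancl2)
  qed
qed

lemma trancl_path: "(i,j) \<in> (rel d W)\<^sup>+ \<Longrightarrow> \<exists>p. is_path d W p i j"
proof (induction rule: trancl_induct)
  case (base y)
  then have "is_path d W [i,y] i y" by (auto simp: is_path_def rel_def less_Suc_eq)
  then show ?case by blast
next
  case (step y z)
  then obtain p where p: "is_path d W p i y" by blast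
  have a: "arrow d W y z" using step by (simp add: rel_def)
  have "is_path d W (p @ [z]) i z"
    unfolding is_path_def
  proof (intro conjI allI impI)
    show "2 \<le> length (p @ [z])" using p by (simp add: is_path_def)
    show "hd (p @ [z]) = i" using p by (cases p) (auto simp: is_path_def)
    show "last (p @ [z]) = z" by simp
  next
    fix k assume k: "Suc k < length (p @ [z])"
    show "arrow d W ((p @ [z]) ! k) ((p @ [z]) ! Suc k)"
    proof (cases "Suc k < length p")
      case True then show ?thesis using p by (simp add: is_path_def nth_append)
    next
      case False
      then have "Suc k = length p" using k by simp
      moreover have "p \<noteq> []" using p by (auto simp: is_path_def)
      ultimately have "p ! k = y" using p
        by (metis diff_Suc_1 is_path_def last_conv_nth)
      then show ?thesis using a \<open>Suc k = length p\<close> by (simp add: nth_append)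
    qed
  qed
  then show ?case by blast
qed

lemma anc_trancl: "ancestor d W i j \<Longrightarrow> (i,j) \<in> (rel d W)\<^sup>+"
  unfolding ancestor_def using path_trancl by blast

theorem lemma5:
  fixes d :: nat and W0 Wt :: "nat \<Rightarrow> nat \<Rightarrow> real"
  assumes "acyclic_graph d W0" and "acyclic_graph d Wt"
    and "\<forall>j\<in>vertices d. \<forall>i. parent d W0 i j \<longrightarrow> ancestor d Wt i j"
  shows "\<forall>j\<in>vertices d. \<forall>k. descendant d W0 k j \<longrightarrow> \<not> ancestor d Wt k j"
proof (intro ballI allI impI notI)
  fix j k assume "j \<in> vertices d" "descendant d W0 k j" "ancestor d Wt k j"
  have sub: "rel d W0 \<subseteq> (rel d Wt)\<^sup>+"
  proof
    fix x assume "x \<in> rel d W0"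
    then obtain a b where x: "x = (a,b)" "arrow d W0 a b" by (auto simp: rel_def)
    then have "b \<in> vertices d" by (simp add: arrow_def)
    then have "ancestor d Wt a b" using assms(3) x by (simp add: parent_def)
    then show "x \<in> (rel d Wt)\<^sup>+" using x anc_trancl by blast
  qed
  have "(j,k) \<in> (rel d W0)\<^sup>+" using \<open>descendant d W0 k j\<close>
    by (simp add: descendant_def anc_trancl)
  then have "(j,k) \<in> (rel d Wt)\<^sup>+"
    using sub trancl_mono_subset[OF sub] trancl_id[OF trans_trancl] by blast
  moreover have "(k,j) \<in> (rel d Wt)\<^sup>+" using \<open>ancestor d Wt k j\<close> anc_trancl by blast
  ultimately have "(j,j) \<in> (rel d Wt)\<^sup>+" by simp
  then obtain p where "is_path d Wt p j j" using trancl_path by blast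
  then show False using assms(2) by (auto simp: acyclic_graph_def)
qed

end
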